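(* Let $b>0$ and $\psi,x_0,x_\infty$ be as in the context. Then $(x-c)\psi'(x)-\psi(x)<0$ for all $x<x_0$, and $(x-c)\psi''(x)-\psi'(x)>0$ for all $x>x_\infty$.
   Context: Constants: $a\in\mathbb{R}$, $b>0$, $\sigma>0$, $\rho>0$, $c>0$. For $\beta<0$, let $D_\beta(x)=\frac{e^{-x^2/4}}{\Gamma(-\beta)}\int_0^\infty t^{-\beta-1}e^{-t^2/2-xt}\,dt$, and $\psi(x)=e^{\frac{(bx-a)^2}{2\sigma^2 b}}D_{-\rho/b}\big(-\frac{bx-a}{\sigma b}\sqrt{2b}\big)$, the positive strictly increasing fundamental solution of $\frac12\sigma^2u''+(a-bx)u'-\rho u=0$. Let $x_0$ be the unique solution on $(c,\infty)$ of $(x-c)\psi'(x)-\psi(x)=0$ and $x_\infty$ the unique solution on $(c,\infty)$ of $(x-c)\psi''(x)-\psi'(x)=0$. *)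

theory Defs
  imports "HOL-Analysis.Analysis"
begin

text \<open>Parabolic cylinder function, integral representation, intended for beta < 0.\<close>
definition parcyl :: "real \<Rightarrow> real \<Rightarrow> real" where
  "parcyl \<beta> x = exp (- (x\<^sup>2) / 4) / Gamma (- \<beta>) *
     integral {0<..} (\<lambda>t. t powr (- \<beta> - 1) * exp (- (t\<^sup>2) / 2 - x * t))"

text \<open>Increasing fundamental solution psi of (1/2) sigma^2 u'' + (a - b x) u' - rho u = 0.\<close>
definition psi_fun :: "real \<Rightarrow> real \<Rightarrow> real \<Rightarrow> real \<Rightarrow> real \<Rightarrow> real" where
  "psi_fun a b \<sigma> \<rho> x = exp ((b * x - a)\<^sup>2 / (2 * \<sigma>\<^sup>2 * b)) *
     parcyl (- \<rho> / b) (- ((b * x - a) / (\<sigma> * b)) * sqrt (2 * b))"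

end

theory Submission
  imports Defs
begin

definition KK :: "real \<Rightarrow> real \<Rightarrow> real \<Rightarrow> real" where
  "KK s w t = t powr (s - 1) * exp (- (t\<^sup>2) / 2 + w * t)"

definition II :: "real \<Rightarrow> real \<Rightarrow> real" where
  "II s w = integral {0<..} (KK s w)"

lemma gamma_int_open:
  fixes s :: real
  assumes "s > 0"
  shows "(\<lambda>t. t powr (s - 1) / exp t) integrable_on {0<..}"
proof -
  have "(\<lambda>t. t powr (s - 1) / exp t) integrable_on {0..}"
    using Gamma_integral_real[OF assms] by blast
  then show ?thesis
    by (rule integrable_spike_set) (auto intro: negligible_subset[of "{0}"])
qed

lemma KK_cont: "continuous_on {0<..} (KK s w)"
  unfolding KK_def by (intro continuous_intros) auto

lemma KK_int:
  fixes s :: real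
  assumes "s > 0"
  shows "KK s w integrable_on {0<..}"
proof -
  have g: "(\<lambda>t. exp ((w+1)\<^sup>2/2) * (t powr (s - 1) / exp t)) integrable_on {0<..}"
    using integrable_cmul[OF gamma_int_open[OF assms], of "exp ((w+1)\<^sup>2/2)"] by (simp only: real_scaleR_def)
  show ?thesis
  proof (rule measurable_bounded_by_integrable_imp_integrable[OF _ g])
    show "KK s w \<in> borel_measurable (lebesgue_on {0<..})"
      by (rule continuous_imp_measurable_on_sets_lebesgue[OF KK_cont]) auto
    show "{0::real<..} \<in> sets lebesgue" by simp
  next
    fix t :: real assume t: "t \<in> {0<..}"
    have e: "- (t\<^sup>2) / 2 + w * t \<le> (w+1)\<^sup>2/2 + (- t)"
      using sum_power2_ge_zero[of "t - (w+1)" 0] by (simp add: power2_eq_square algebra_simps)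
    have "norm (KK s w t) = t powr (s - 1) * exp (- (t\<^sup>2) / 2 + w * t)"
      unfolding KK_def by simp
    also have "\<dots> \<le> t powr (s - 1) * exp ((w+1)\<^sup>2/2 + (- t))"
      using e by (intro mult_left_mono) auto
    also have "\<dots> = exp ((w+1)\<^sup>2/2) * (t powr (s - 1) / exp t)"
      unfolding exp_add exp_minus divide_inverse by (simp only: mult_ac)
    finally show "norm (KK s w t) \<le> exp ((w+1)\<^sup>2/2) * (t powr (s - 1) / exp t)" .
  qed
qed

lemma KK_pos: "t > 0 \<Longrightarrow> KK s w t > 0"
  unfolding KK_def by simp

lemma II_pos:
  assumes "s > 0"
  shows "II s w > 0"
proof -
  have i12: "KK s w integrable_on {1..2}"
    by (rule integrable_continuous_real, rule continuous_on_subset[OF KK_cont]) auto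
  have "integral {1..2::real} (\<lambda>_. 0::real) < integral {1..2} (KK s w)"
    by (rule integral_less_real) (auto intro: continuous_on_subset[OF KK_cont] KK_pos)
  also have "integral {1..2} (KK s w) \<le> II s w"
    unfolding II_def
    by (rule integral_subset_le) (auto intro: i12 KK_int[OF assms] less_imp_le[OF KK_pos] integrable_continuous_real continuous_on_subset[OF KK_cont])
  finally show ?thesis by simp
qed


lemma exp_taylor_bound: fixes x :: real shows "\<bar>exp x - 1 - x\<bar> \<le> x\<^sup>2 * exp \<bar>x\<bar>"
proof -
  obtain t where t: "\<bar>t\<bar> \<le> \<bar>x\<bar>" "exp x = (\<Sum>m<2. x ^ m / fact m) + exp t / fact 2 * x ^ 2"
    using Maclaurin_exp_le[of x 2] by blast
  have e: "exp x - 1 - x = exp t * x\<^sup>2 / 2" using t(2) by (simp add: eval_nat_numeral field_simps)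
  have "exp t \<le> exp \<bar>x\<bar>" using t(1) by simp
  hence m: "exp t * x\<^sup>2 \<le> exp \<bar>x\<bar> * x\<^sup>2" by (rule mult_right_mono) simp
  have "0 \<le> exp t * x\<^sup>2" by simp
  hence nn: "exp x - 1 - x \<ge> 0" unfolding e by simp
  have "\<bar>exp x - 1 - x\<bar> = exp t * x\<^sup>2 / 2" by (subst abs_of_nonneg[OF nn]) (rule e)
  also have "\<dots> \<le> x\<^sup>2 * exp \<bar>x\<bar>" 
  proof -
    have "exp t * x\<^sup>2 / 2 \<le> exp \<bar>x\<bar> * x\<^sup>2" using m \<open>0 \<le> exp t * x\<^sup>2\<close> by linarith
    thus ?thesis by (simp add: mult.commute)
  qed
  finally show ?thesis .
qed

lemma KK_diff_bound:
  assumes t: "t > 0" and h: "\<bar>h\<bar> \<le> 1"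
  shows "\<bar>KK s (w+h) t - KK s w t - h * KK (s+1) w t\<bar> \<le> h\<^sup>2 * KK (s+2) (\<bar>w\<bar>+1) t"
proof -
  define P where "P = t powr (s - 1)"
  define E where "E = exp (- (t\<^sup>2) / 2 + w * t)"
  have P1: "t powr (s + 1 - 1) = P * t"
  proof -
    have "t powr (s + 1 - 1) = t powr ((s - 1) + 1)" by simp
    also have "\<dots> = P * t" using t by (simp only: powr_add P_def powr_one)
    finally show ?thesis .
  qed
  have P2: "t powr (s + 2 - 1) = P * t\<^sup>2"
  proof -
    have "t powr (s + 2 - 1) = t powr ((s - 1) + 2)" by simp
    also have "\<dots> = P * t powr 2" by (simp only: powr_add P_def)
    also have "t powr 2 = t\<^sup>2" using t by (simp add: powr_numeral)
    finally show ?thesis .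
  qed
  have P: "P > 0" "t powr (s + 1 - 1) = P * t" "t powr (s + 2 - 1) = P * t\<^sup>2"
    using t P1 P2 by (auto simp: P_def)
  have E: "E > 0" by (simp add: E_def)
  have "KK s (w+h) t - KK s w t - h * KK (s+1) w t = P * E * (exp (h*t) - 1 - h*t)"
    unfolding KK_def P(2) P_def[symmetric] E_def
    by (simp add: algebra_simps exp_add[symmetric])
  hence "\<bar>KK s (w+h) t - KK s w t - h * KK (s+1) w t\<bar> = P * E * \<bar>exp (h*t) - 1 - h*t\<bar>"
    using P E by (simp add: abs_mult)
  also have "\<dots> \<le> P * E * ((h*t)\<^sup>2 * exp \<bar>h*t\<bar>)"
    using P E exp_taylor_bound[of "h*t"] by (intro mult_left_mono) auto
  also have "\<dots> = h\<^sup>2 * (P * t\<^sup>2) * exp (- (t\<^sup>2) / 2 + (w + \<bar>h\<bar>) * t)"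
    using t by (simp add: E_def abs_mult power_mult_distrib exp_add[symmetric] algebra_simps)
  also have "\<dots> \<le> h\<^sup>2 * (P * t\<^sup>2) * exp (- (t\<^sup>2) / 2 + (\<bar>w\<bar> + 1) * t)"
  proof -
    have "(w + \<bar>h\<bar>) * t \<le> (\<bar>w\<bar> + 1) * t" using t h by (intro mult_right_mono) auto
    then show ?thesis using P t by (intro mult_left_mono) auto
  qed
  also have "\<dots> = h\<^sup>2 * KK (s+2) (\<bar>w\<bar>+1) t"
    unfolding KK_def P(3) by simp
  finally show ?thesis .
qed

lemma II_deriv:
  fixes s :: real
  assumes s: "s > 0"
  shows "(II s has_real_derivative II (s+1) w) (at w)"
proof -
  define C where "C = II (s+2) (\<bar>w\<bar>+1)"
  have bound: "\<bar>II s (w+h) - II s w - h * II (s+1) w\<bar> \<le> h\<^sup>2 * C" if h: "\<bar>h\<bar> \<le> 1" for h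
  proof -
    have i1: "KK s (w+h) integrable_on {0<..}" "KK s w integrable_on {0<..}"
      "KK (s+1) w integrable_on {0<..}" "KK (s+2) (\<bar>w\<bar>+1) integrable_on {0<..}"
      using s by (auto intro!: KK_int)
    have a: "(\<lambda>t. KK s (w+h) t - KK s w t) integrable_on {0<..}"
      using i1 by (intro integrable_diff) auto
    have b: "(\<lambda>t. h * KK (s+1) w t) integrable_on {0<..}"
      using integrable_cmul[OF i1(3), of h] by (simp only: real_scaleR_def)
    have ia: "(\<lambda>t. KK s (w+h) t - KK s w t - h * KK (s+1) w t) integrable_on {0<..}"
      using integrable_diff[OF a b] .
    have ib: "(\<lambda>t. h\<^sup>2 * KK (s+2) (\<bar>w\<bar>+1) t) integrable_on {0<..}"
      using integrable_cmul[OF i1(4), of "h\<^sup>2"] by (simp only: real_scaleR_def)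
    have "II s (w+h) - II s w - h * II (s+1) w =
        integral {0<..} (\<lambda>t. KK s (w+h) t - KK s w t - h * KK (s+1) w t)"
    proof -
      have "integral {0<..} (\<lambda>t. KK s (w+h) t - KK s w t - h * KK (s+1) w t) =
          integral {0<..} (\<lambda>t. KK s (w+h) t - KK s w t) - integral {0<..} (\<lambda>t. h * KK (s+1) w t)"
        by (rule integral_diff[OF a b])
      also have "integral {0<..} (\<lambda>t. KK s (w+h) t - KK s w t) = II s (w+h) - II s w"
        unfolding II_def using i1 by (intro integral_diff) auto
      also have "integral {0<..} (\<lambda>t. h * KK (s+1) w t) = h * II (s+1) w"
        unfolding II_def by simp
      finally show ?thesis by simp
    qed
    also have "\<bar>\<dots>\<bar> \<le> integral {0<..} (\<lambda>t. h\<^sup>2 * KK (s+2) (\<bar>w\<bar>+1) t)"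
    proof -
      have "norm (integral {0<..} (\<lambda>t. KK s (w+h) t - KK s w t - h * KK (s+1) w t))
          \<le> integral {0<..} (\<lambda>t. h\<^sup>2 * KK (s+2) (\<bar>w\<bar>+1) t)"
        apply (rule integral_norm_bound_integral[OF ia ib])
        using KK_diff_bound[OF _ h] by (simp add: real_norm_def)
      then show ?thesis by (simp only: real_norm_def)
    qed
    also have "\<dots> = h\<^sup>2 * C" unfolding C_def II_def by simp
    finally show ?thesis .
  qed
  have key: "norm ((II s (w+h) - II s w) / h - II (s+1) w) \<le> \<bar>h\<bar> * C"
    if h: "h \<noteq> 0" "\<bar>h\<bar> \<le> 1" for h
  proof -
    have "(II s (w+h) - II s w) / h - II (s+1) w = (II s (w+h) - II s w - h * II (s+1) w) / h"
      using h by (simp add: field_simps)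
    hence "norm ((II s (w+h) - II s w) / h - II (s+1) w) = \<bar>II s (w+h) - II s w - h * II (s+1) w\<bar> / \<bar>h\<bar>"
      by simp
    also have "\<dots> \<le> h\<^sup>2 * C / \<bar>h\<bar>"
      using bound[OF h(2)] h by (intro divide_right_mono) auto
    also have "\<dots> = \<bar>h\<bar> * \<bar>h\<bar> * C / \<bar>h\<bar>" by (simp add: power2_eq_square)
    also have "\<dots> = \<bar>h\<bar> * C" using h
      by (simp only: mult.assoc) (rule nonzero_mult_div_cancel_left, simp)
    finally show "norm ((II s (w+h) - II s w) / h - II (s+1) w) \<le> \<bar>h\<bar> * C" .
  qed
  have ev: "eventually (\<lambda>h. norm ((II s (w+h) - II s w) / h - II (s+1) w) \<le> \<bar>h\<bar> * C) (at 0)"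
    unfolding eventually_at by (intro exI[of _ 1]) (auto intro!: key[unfolded real_norm_def])
  have "((\<lambda>h. \<bar>h\<bar> * C) \<longlongrightarrow> 0) (at 0)"
    by (rule tendsto_eq_intros) (auto intro!: tendsto_eq_intros)
  from Lim_null_comparison[OF ev this]
  show ?thesis unfolding DERIV_def by (simp add: LIM_zero_iff)
qed


lemma final_arg:
  fixes p0 p1 p2 :: "real \<Rightarrow> real"
  assumes d0: "\<And>x. (p0 has_real_derivative p1 x) (at x)"
    and d1: "\<And>x. (p1 has_real_derivative p2 x) (at x)"
    and pos0: "\<And>x. p0 x > 0" and pos1: "\<And>x. p1 x > 0"
    and mono1: "\<And>x y. x < y \<Longrightarrow> p1 x < p1 y"
    and mono2: "\<And>x y. x < y \<Longrightarrow> p2 x < p2 y"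
    and x0: "x0 > c" "(x0 - c) * p1 x0 - p0 x0 = 0"
    and xi: "xinf > c" "(xinf - c) * p2 xinf - p1 xinf = 0"
  shows "(\<forall>x<x0. (x - c) * p1 x - p0 x < 0) \<and> (\<forall>x>xinf. (x - c) * p2 x - p1 x > 0)"
proof (intro conjI allI impI)
  fix x assume xx: "x < x0"
  show "(x - c) * p1 x - p0 x < 0"
  proof (cases "x \<le> c")
    case True
    have "(x - c) * p1 x \<le> 0" using True pos1[of x] by (intro mult_nonpos_nonneg) auto
    then show ?thesis using pos0[of x] by linarith
  next
    case False
    obtain z where z: "x < z" "z < x0" "p0 x0 - p0 x = (x0 - x) * p1 z"
      using MVT2[OF xx, of p0 p1] d0 by blast
    have a: "(x0 - x) * p1 z < (x0 - x) * p1 x0" using z xx mono1[of z x0] by simp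
    have b: "(x - c) * p1 x < (x - c) * p1 x0" using False xx mono1[of x x0] by simp
    have e: "(x0 - c) * p1 x0 - (x0 - x) * p1 x0 = (x - c) * p1 x0" by (simp add: algebra_simps)
    show ?thesis using a b e z(3) x0(2) by linarith
  qed
next
  fix x assume xx: "x > xinf"
  obtain z where z: "xinf < z" "z < x" "p1 x - p1 xinf = (x - xinf) * p2 z"
    using MVT2[OF xx, of p1 p2] d1 by blast
  have a: "(x - xinf) * p2 z < (x - xinf) * p2 x" using z xx mono2[of z x] by simp
  have b: "(xinf - c) * p2 xinf < (xinf - c) * p2 x" using xi(1) xx mono2[of xinf x] by (intro mult_strict_left_mono) auto
  have e: "(x - c) * p2 x - (x - xinf) * p2 x = (xinf - c) * p2 x" by (simp add: algebra_simps)
  show "(x - c) * p2 x - p1 x > 0" using a b e z(3) xi(2) by linarith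
qed

lemma F_deriv:
  fixes s k m c :: real
  assumes "s > 0"
  shows "((\<lambda>x. c * II s (k*x+m)) has_real_derivative (c*k) * II (s+1) (k*x+m)) (at x)"
proof -
  have "((\<lambda>x. II s (k*x+m)) has_real_derivative II (s+1) (k*x+m) * k) (at x)"
    by (rule DERIV_chain2[OF II_deriv[OF assms]]) (auto intro!: derivative_eq_intros)
  from DERIV_cmult[OF this, of c] show ?thesis by (simp add: mult_ac)
qed

lemma psi_eq:
  fixes a b \<sigma> \<rho> :: real
  assumes hb: "b > 0" and h\<sigma>: "\<sigma> > 0"
  shows "psi_fun a b \<sigma> \<rho> x = (1 / Gamma (\<rho>/b)) *
     II (\<rho>/b) ((sqrt (2*b)/\<sigma>) * x + (- (a/(\<sigma>*b)) * sqrt (2*b)))"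
proof -
  define u where "u = (sqrt (2*b)/\<sigma>) * x + (- (a/(\<sigma>*b)) * sqrt (2*b))"
  have u: "u = (b*x - a) * sqrt (2*b) / (\<sigma> * b)"
    unfolding u_def using hb h\<sigma> by (simp add: field_simps)
  have z: "- ((b * x - a) / (\<sigma> * b)) * sqrt (2 * b) = - u" unfolding u by simp
  have sq: "(sqrt (2*b))\<^sup>2 = 2*b" using hb by simp
  have he: "(b * x - a)\<^sup>2 / (2 * \<sigma>\<^sup>2 * b) = u\<^sup>2 / 4"
    unfolding u power_divide power_mult_distrib sq using hb h\<sigma> by (simp add: field_simps power2_eq_square)
  have int: "(\<lambda>t. t powr (- (- \<rho> / b) - 1) * exp (- (t\<^sup>2) / 2 - (- u) * t)) = KK (\<rho>/b) u"
    unfolding KK_def by (rule ext) simp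
  show ?thesis
    unfolding psi_fun_def parcyl_def z he int u_def[symmetric] II_def
    by (simp add: exp_minus field_simps)
qed


theorem corollary4p6:
  fixes a b \<sigma> \<rho> c x0 xinf :: real
  assumes hb: "b > 0" and h\<sigma>: "\<sigma> > 0" and h\<rho>: "\<rho> > 0" and hc: "c > 0"
    and hx0: "x0 > c"
      "(x0 - c) * deriv (psi_fun a b \<sigma> \<rho>) x0 - psi_fun a b \<sigma> \<rho> x0 = 0"
      "\<forall>y>c. (y - c) * deriv (psi_fun a b \<sigma> \<rho>) y - psi_fun a b \<sigma> \<rho> y = 0 \<longrightarrow> y = x0"
    and hxi: "xinf > c"
      "(xinf - c) * deriv (deriv (psi_fun a b \<sigma> \<rho>)) xinf - deriv (psi_fun a b \<sigma> \<rho>) xinf = 0"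
      "\<forall>y>c. (y - c) * deriv (deriv (psi_fun a b \<sigma> \<rho>)) y - deriv (psi_fun a b \<sigma> \<rho>) y = 0
              \<longrightarrow> y = xinf"
  shows "(\<forall>x<x0. (x - c) * deriv (psi_fun a b \<sigma> \<rho>) x - psi_fun a b \<sigma> \<rho> x < 0) \<and>
         (\<forall>x>xinf. (x - c) * deriv (deriv (psi_fun a b \<sigma> \<rho>)) x - deriv (psi_fun a b \<sigma> \<rho>) x > 0)"
proof -
  define \<nu> where "\<nu> = \<rho> / b"
  define k where "k = sqrt (2*b) / \<sigma>"
  define m where "m = - (a/(\<sigma>*b)) * sqrt (2*b)"
  define G where "G = Gamma \<nu>"
  define F where "F = (\<lambda>C s x. C * II s (k*x+m))"
  have \<nu>: "\<nu> > 0" unfolding \<nu>_def using hb h\<rho> by simp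
  have k: "k > 0" unfolding k_def using hb h\<sigma> by simp
  have G: "G > 0" unfolding G_def using \<nu> by (simp add: Gamma_real_pos)
  have Fd: "((F C s) has_real_derivative F (C*k) (s+1) x) (at x)" if "s > 0" for C s x
    unfolding F_def using F_deriv[OF that] .
  have Fp: "F C s x > 0" if "s > 0" "C > 0" for C s x
    unfolding F_def using II_pos[OF that(1)] that(2) by simp
  define p0 where "p0 = F (1/G) \<nu>"
  define p1 where "p1 = F (1/G*k) (\<nu>+1)"
  define p2 where "p2 = F (1/G*k*k) (\<nu>+1+1)"
  define p3 where "p3 = F (1/G*k*k*k) (\<nu>+1+1+1)"
  have d0: "(p0 has_real_derivative p1 x) (at x)" for x
    unfolding p0_def p1_def by (rule Fd) (use \<nu> in simp)
  have d1: "(p1 has_real_derivative p2 x) (at x)" for x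
    unfolding p1_def p2_def by (rule Fd) (use \<nu> in simp)
  have d2: "(p2 has_real_derivative p3 x) (at x)" for x
    unfolding p2_def p3_def by (rule Fd) (use \<nu> in simp)
  have pos: "p0 x > 0" "p1 x > 0" "p2 x > 0" "p3 x > 0" for x
    unfolding p0_def p1_def p2_def p3_def using \<nu> G k by (auto intro!: Fp)
  have mono1: "p1 x < p1 y" if "x < y" for x y
    using DERIV_pos_imp_increasing[OF that, of p1] d1 pos(3) by blast
  have mono2: "p2 x < p2 y" if "x < y" for x y
    using DERIV_pos_imp_increasing[OF that, of p2] d2 pos(4) by blast
  have psi: "psi_fun a b \<sigma> \<rho> = p0"
    unfolding p0_def F_def \<nu>_def k_def m_def G_def
    by (rule ext, rule psi_eq[OF hb h\<sigma>])
  have dp0: "deriv p0 = p1" by (rule ext, rule DERIV_imp_deriv[OF d0])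
  have dp1: "deriv p1 = p2" by (rule ext, rule DERIV_imp_deriv[OF d1])
  show ?thesis
    unfolding psi dp0 dp1
  proof (rule final_arg[OF d0 d1 pos(1) pos(2) mono1 mono2 hx0(1) _ hxi(1)])
    show "(x0 - c) * p1 x0 - p0 x0 = 0" using hx0(2) unfolding psi dp0 .
    show "(xinf - c) * p2 xinf - p1 xinf = 0" using hxi(2) unfolding psi dp0 dp1 .
  qed
qed

end
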